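(* Let $m\ge 2$, let $p\in\mathbb{R}^m$ be a probability vector and let $L(y,g)=\max_{j\in\mathcal{Y}}\{\mathbf{1}[j\ne y]+g_j-g_y\}$ be the multiclass hinge loss. Then $$\inf_{g\in\mathbb{R}^m}\sum_{l=1}^m p_l\,L(l,g)=\min\{1,\;2(1-\max_{y}p_y)\},$$ and the infimum is attained: if $\max_y p_y<\tfrac12$ by every constant vector $g=c\mathbf{1}$, $c\in\mathbb{R}$; and if $p_{y^*}=\max_y p_y\ge\tfrac12$ by $g=c\mathbf{1}+e_{y^*}$ for every $c\in\mathbb{R}$.
   Context: Classes $\mathcal{Y}=\{1,\dots,m\}$; $\mathbf{1}$ is the all-ones vector and $e_y$ the $y$-th standard basis vector of $\mathbb{R}^m$. *)

theory Defs
  imports "HOL-Analysis.Analysis"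
begin

definition hinge_loss :: "'m::finite \<Rightarrow> real ^ 'm \<Rightarrow> real" where
  "hinge_loss y g = (MAX j\<in>UNIV. (if j \<noteq> y then 1 else 0) + g $ j - g $ y)"

definition cond_risk :: "real ^ 'm::finite \<Rightarrow> real ^ 'm \<Rightarrow> real" where
  "cond_risk p g = (\<Sum>l\<in>UNIV. p $ l * hinge_loss l g)"

definition prob_vector :: "real ^ 'm::finite \<Rightarrow> bool" where
  "prob_vector p \<longleftrightarrow> (\<forall>i. p $ i \<ge> 0) \<and> (\<Sum>i\<in>UNIV. p $ i) = 1"

end

theory Submission
  imports Defs
begin

lemma card_ge_2_ex: "CARD('m::finite) \<ge> 2 \<Longrightarrow> UNIV - {y::'m} \<noteq> {}"
proof
  assume "CARD('m) \<ge> 2" "UNIV - {y} = {}"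
  then have "(UNIV::'m set) = {y}" by auto
  then have "CARD('m) = card {y}" by (simp only:)
  then show False using \<open>CARD('m) \<ge> 2\<close> by simp
qed

lemma hinge_ge: "hinge_loss y g \<ge> (if j \<noteq> y then 1 else 0) + g $ j - g $ y"
  unfolding hinge_loss_def by (rule Max_ge) auto

lemma hinge_const:
  assumes "CARD('m::finite) \<ge> 2"
  shows "hinge_loss (y::'m) (\<chi> j. c) = 1"
proof -
  obtain j :: 'm where "j \<noteq> y"
  proof -
    have "UNIV - {y} \<noteq> {}" using assms
      by (rule card_ge_2_ex)
    then show ?thesis using that by blast
  qed
  show ?thesis unfolding hinge_loss_def
    by (rule Max_eqI) (auto intro: exI[of _ j] simp: \<open>j \<noteq> y\<close> image_iff intro!: bexI[of _ j])
qed

lemma hinge_e_star: "hinge_loss ys (\<chi> j. c + (if j = ys then 1 else 0)) = 0"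
  unfolding hinge_loss_def by (rule Max_eqI) (auto simp: image_iff)

lemma hinge_e_other:
  assumes "l \<noteq> ys"
  shows "hinge_loss l (\<chi> j. c + (if j = ys then 1 else 0)) = 2"
  unfolding hinge_loss_def using assms
  by (intro Max_eqI) (auto simp: image_iff intro!: bexI[of _ ys])

lemma risk_const:
  assumes "CARD('m::finite) \<ge> 2" "prob_vector p"
  shows "cond_risk (p::real^'m) (\<chi> j. c) = 1"
  using assms unfolding cond_risk_def prob_vector_def by (simp add: hinge_const)

lemma risk_e:
  assumes "prob_vector (p::real^'m::finite)"
  shows "cond_risk p (\<chi> j. c + (if j = ys then 1 else 0)) = 2 * (1 - p $ ys)"
proof -
  have "cond_risk p (\<chi> j. c + (if j = ys then 1 else 0))
     = p $ ys * 0 + (\<Sum>l\<in>UNIV - {ys}. p $ l * 2)"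
    unfolding cond_risk_def
    by (subst sum.remove[of UNIV ys]) (auto simp: hinge_e_star hinge_e_other)
  also have "\<dots> = 2 * (\<Sum>l\<in>UNIV - {ys}. p $ l)" by (simp add: sum_distrib_left mult.commute)
  also have "(\<Sum>l\<in>UNIV - {ys}. p $ l) = 1 - p $ ys"
    using assms unfolding prob_vector_def by (simp add: sum_diff1)
  finally show ?thesis by simp
qed

lemma lower:
  assumes "CARD('m::finite) \<ge> 2" "prob_vector (p::real^'m)"
  shows "cond_risk p g \<ge> min 1 (2 * (1 - (MAX y\<in>UNIV. p $ y)))"
proof -
  obtain k where k: "\<forall>i. g $ i \<le> g $ k"
  proof -
    have "Max (range (\<lambda>i. g $ i)) \<in> range (\<lambda>i. g $ i)" by (rule Max_in) auto
    then obtain k where "g $ k = Max (range (\<lambda>i. g $ i))" by (metis imageE)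
    moreover have "\<forall>i. g $ i \<le> Max (range (\<lambda>i. g $ i))" by (auto intro: Max_ge)
    ultimately show ?thesis using that[of k] by simp
  qed
  have ne: "UNIV - {k} \<noteq> {}" using assms(1)
    by (rule card_ge_2_ex)
  obtain j where j: "j \<noteq> k" "\<forall>i. i \<noteq> k \<longrightarrow> g $ i \<le> g $ j"
  proof -
    have "Max ((\<lambda>i. g $ i) ` (UNIV - {k})) \<in> (\<lambda>i. g $ i) ` (UNIV - {k})" using ne by (intro Max_in) auto
    then obtain j :: 'm where j1: "j \<in> UNIV - {k}" "g $ j = Max ((\<lambda>i. g $ i) ` (UNIV - {k}))" by (metis imageE)
    then have "j \<noteq> k" "g $ j = Max ((\<lambda>i. g $ i) ` (UNIV - {k}))" by auto
    moreover have "\<forall>i. i \<noteq> k \<longrightarrow> g $ i \<le> Max ((\<lambda>i. g $ i) ` (UNIV - {k}))" by (auto intro: Max_ge)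
    ultimately show ?thesis using that by auto
  qed
  define d where "d = g $ k - g $ j"
  have d0: "d \<ge> 0" using k d_def by auto
  have A: "\<forall>l. l \<noteq> k \<longrightarrow> hinge_loss l g \<ge> 1 + d"
  proof (intro allI impI)
    fix l assume "l \<noteq> k"
    have "hinge_loss l g \<ge> (if k \<noteq> l then 1 else 0) + g $ k - g $ l" by (rule hinge_ge)
    then show "hinge_loss l g \<ge> 1 + d" using \<open>l \<noteq> k\<close> j d_def by force
  qed
  have B0: "hinge_loss k g \<ge> 0" using hinge_ge[where y=k and g=g and j=k] by simp
  have B1: "hinge_loss k g \<ge> 1 - d" using hinge_ge[where y=k and g=g and j=j] j d_def by simp
  have pos: "\<forall>i. p $ i \<ge> 0" and s1: "(\<Sum>i\<in>UNIV. p $ i) = 1" using assms(2) prob_vector_def by auto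
  have E1: "cond_risk p g = p $ k * hinge_loss k g + (\<Sum>l\<in>UNIV - {k}. p $ l * hinge_loss l g)"
    unfolding cond_risk_def by (subst sum.remove[of UNIV k]) auto
  have E2: "(\<Sum>l\<in>UNIV - {k}. p $ l * hinge_loss l g) \<ge> (\<Sum>l\<in>UNIV - {k}. p $ l * (1 + d))"
    using A pos by (intro sum_mono mult_left_mono) auto
  have E3: "(\<Sum>l\<in>UNIV - {k}. p $ l * (1 + d)) = (1 - p $ k) * (1 + d)"
    using s1 by (simp add: sum_distrib_right[symmetric] sum_diff1)
  have R: "cond_risk p g \<ge> p $ k * hinge_loss k g + (1 - p $ k) * (1 + d)" using E1 E2 E3 by linarith
  have pkM: "p $ k \<le> (MAX y\<in>UNIV. p $ y)" by (rule Max_ge) auto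
  have pk0: "p $ k \<ge> 0" using pos by auto
  have pk1: "p $ k \<le> 1"
  proof -
    have "(\<Sum>l\<in>UNIV - {k}. p $ l) \<ge> 0" using pos by (intro sum_nonneg) auto
    then show ?thesis using s1 by (simp add: sum_diff1)
  qed
  show ?thesis
  proof (cases "d \<ge> 1")
    case True
    have "p $ k * hinge_loss k g \<ge> 0" using pk0 B0 by simp
    moreover have "(1 - p $ k) * (1 + d) \<ge> (1 - p $ k) * 2" using True pk1 by (intro mult_left_mono) auto
    ultimately show ?thesis using R pkM by (smt (verit))
  next
    case False
    have "p $ k * hinge_loss k g \<ge> p $ k * (1 - d)" using pk0 B1 by (intro mult_left_mono)
    then have R2: "cond_risk p g \<ge> 1 + d * (1 - 2 * p $ k)" using R by (simp add: algebra_simps)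
    show ?thesis
    proof (cases "p $ k \<le> 1/2")
      case True
      then have "d * (1 - 2 * p $ k) \<ge> 0" using d0 by simp
      then show ?thesis using R2 by (smt (verit))
    next
      case False
      have "(1 - 2 * p $ k) * (d - 1) \<ge> 0" using False \<open>\<not> d \<ge> 1\<close>
        by (intro mult_nonpos_nonpos) auto
      then have "1 + d * (1 - 2 * p $ k) \<ge> 2 * (1 - p $ k)" by (simp add: algebra_simps)
      then show ?thesis using R2 pkM by (smt (verit))
    qed
  qed
qed

theorem mainTheorem6:
  fixes p :: "real ^ 'm::finite"
  assumes "CARD('m) \<ge> 2"
    and "prob_vector p"
  shows "(INF g. cond_risk p g) = min 1 (2 * (1 - (MAX y\<in>UNIV. p $ y)))
    \<and> ((MAX y\<in>UNIV. p $ y) < 1/2 \<longrightarrow>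
         (\<forall>c. cond_risk p (\<chi> j. c) = (INF g. cond_risk p g)))
    \<and> (\<forall>ystar. p $ ystar = (MAX y\<in>UNIV. p $ y) \<and> (MAX y\<in>UNIV. p $ y) \<ge> 1/2 \<longrightarrow>
         (\<forall>c. cond_risk p (\<chi> j. c + (if j = ystar then 1 else 0)) = (INF g. cond_risk p g)))"
proof -
  define M where "M = (MAX y\<in>UNIV. p $ y)"
  obtain ys where ys: "p $ ys = M"
  proof -
    have "M \<in> range (\<lambda>y. p $ y)" unfolding M_def by (rule Max_in) auto
    then show ?thesis using that by auto
  qed
  obtain g0 where g0: "cond_risk p g0 = min 1 (2 * (1 - M))"
  proof (cases "1 \<le> 2 * (1 - M)")
    case True then show ?thesis using that[of "\<chi> j. 0"] risk_const[OF assms] by simp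
  next
    case False then show ?thesis using that[of "\<chi> j. 0 + (if j = ys then 1 else 0)"] risk_e[OF assms(2), of 0 ys] ys by simp
  qed
  have L: "\<And>g. min 1 (2 * (1 - M)) \<le> cond_risk p g" unfolding M_def by (rule lower[OF assms])
  have I: "(INF g. cond_risk p g) = min 1 (2 * (1 - M))"
  proof (rule antisym)
    show "(INF g. cond_risk p g) \<le> min 1 (2 * (1 - M))"
      proof -
      have "(INF g. cond_risk p g) \<le> cond_risk p g0"
        proof (rule cINF_lower)
          show "bdd_below (range (cond_risk p))" using L by (intro bdd_belowI) (auto simp del: L)
        qed simp
      then show ?thesis using g0 by simp
    qed
    show "min 1 (2 * (1 - M)) \<le> (INF g. cond_risk p g)"
      using L by (intro cINF_greatest) simp_all
  qed
  have P2: "M < 1/2 \<longrightarrow> (\<forall>c. cond_risk p (\<chi> j. c) = min 1 (2 * (1 - M)))"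
    using risk_const[OF assms] by simp
  have P3: "\<forall>ystar. p $ ystar = M \<and> M \<ge> 1/2 \<longrightarrow>
         (\<forall>c. cond_risk p (\<chi> j. c + (if j = ystar then 1 else 0)) = min 1 (2 * (1 - M)))"
    using risk_e[OF assms(2)] by simp
  show ?thesis
    unfolding M_def[symmetric] I using P2 P3 by blast
qed

end
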